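(* Let $A\in\mathbb{R}^{n\times n}$, let $W\in\mathbb{R}^{n\times n}$ be symmetric positive definite, let $C=\mathrm{diag}(C_{11},\dots,C_{nn})$ be diagonal positive definite and $V=\mathrm{diag}(\sigma_1^2,\dots,\sigma_n^2)$ with $\sigma_i>0$. Let $\Sigma\succ0$ be the solution of the discrete algebraic Riccati equation $\Sigma=A\Sigma A^T-A\Sigma C^T(C\Sigma C^T+V)^{-1}C\Sigma A^T+W$. Then $$\ln\det\Sigma\ge\ln\left[\frac{(\det A)^2}{\frac1n\left(\mathrm{tr}\,W^{-1}+\sum_{i=1}^n\frac{C_{ii}^2}{\sigma_i^2}\right)^n}+\det W\right].$$ *)

theory Defs
  imports "HOL-Analysis.Analysis"
begin

definition pos_def_mat :: "real^'n^'n \<Rightarrow> bool" where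
  "pos_def_mat M \<longleftrightarrow> transpose M = M \<and> (\<forall>x. x \<noteq> 0 \<longrightarrow> x \<bullet> (M *v x) > 0)"

definition diag_mat :: "real^'n^'n \<Rightarrow> bool" where
  "diag_mat M \<longleftrightarrow> (\<forall>i j. i \<noteq> j \<longrightarrow> M $ i $ j = 0)"

end

theory Submission
  imports Defs
begin




lemma matrix_add_rdistrib': "((B + C) ** A) = (B ** A) + (C ** A)"
  for A B C :: "real^'n^'n"
  by (vector matrix_matrix_mult_def sum.distrib[symmetric] field_simps)

lemma matrix_sub_ldistrib': "(A ** (B - C)) = (A ** B) - (A ** C)"
  for A B C :: "real^'n^'n"
  by (vector matrix_matrix_mult_def sum_subtractf[symmetric] field_simps)

lemma matrix_sub_rdistrib': "((B - C) ** A) = (B ** A) - (C ** A)"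
  for A B C :: "real^'n^'n"
  by (vector matrix_matrix_mult_def sum_subtractf[symmetric] field_simps)

lemma transpose_add': "transpose (A + B) = transpose A + transpose (B::real^'n^'n)"
  by (simp add: transpose_def vec_eq_iff)

lemma transpose_sub': "transpose (A - B) = transpose A - transpose (B::real^'n^'n)"
  by (simp add: transpose_def vec_eq_iff)

lemma sym_dot:
  fixes M :: "real^'n^'n"
  assumes "transpose M = M"
  shows "(M *v x) \<bullet> y = x \<bullet> (M *v y)"
proof -
  have "x \<bullet> (M *v y) = (x v* M) \<bullet> y" by (simp add: dot_lmul_matrix)
  also have "x v* M = x v* transpose M" using assms by simp
  also have "\<dots> = M *v x" by simp
  finally show ?thesis by simp
qed

lemma quad_zero:
  fixes a d :: real
  assumes "\<And>t. 2*t*a + t^2*d \<le> 0"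
  shows "a = 0"
proof (rule ccontr)
  assume a: "a \<noteq> 0"
  define s where "s = \<bar>d\<bar> + 1"
  have s: "s > 0" "s \<ge> 1" "d \<ge> - s + 1" unfolding s_def by auto
  have "2*(a/s)*a + (a/s)^2*d \<le> 0" by (rule assms)
  hence 1: "2*a*a* s + a*a*d \<le> 0" using s
    by (simp add: field_simps power2_eq_square)
  have "a*a > 0" using a not_real_square_gt_zero by blast
  moreover have "2 * s + d > 0" using s by linarith
  ultimately have "a*a*(2 * s + d) > 0" by (rule mult_pos_pos)
  with 1 show False by (simp add: algebra_simps)
qed

lemma eig_exists:
  fixes M :: "real^'n^'n"
  assumes sym: "transpose M = M" and U: "subspace U"
    and inv: "\<And>x. x \<in> U \<Longrightarrow> M *v x \<in> U" and x0: "x0 \<in> U" "x0 \<noteq> 0"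
  shows "\<exists>u\<in>U. norm u = 1 \<and> M *v u = (u \<bullet> (M *v u)) *\<^sub>R u"
proof -
  let ?K = "sphere 0 1 \<inter> U"
  have cK: "compact ?K" using closed_subspace[OF U] by (intro compact_Int_closed) auto
  have "x0 /\<^sub>R norm x0 \<in> ?K" using x0 U by (auto simp: subspace_scale)
  hence neK: "?K \<noteq> {}" by blast
  have coK: "continuous_on ?K (\<lambda>x. x \<bullet> (M *v x))"
    by (intro continuous_on_inner continuous_on_id matrix_vector_mult_linear_continuous_on)
  obtain u where u: "u \<in> ?K" and umax: "\<And>y. y \<in> ?K \<Longrightarrow> y \<bullet> (M *v y) \<le> u \<bullet> (M *v u)"
    using continuous_attains_sup[OF cK neK coK] by metis
  define lam where "lam = u \<bullet> (M *v u)"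
  have uU: "u \<in> U" and nu: "norm u = 1" using u by auto
  have uu: "u \<bullet> u = 1" using nu by (simp add: dot_square_norm)
  have key: "v \<bullet> (M *v u) = 0" if vU: "v \<in> U" and vu: "v \<bullet> u = 0" for v
  proof -
    have "2*t*(v \<bullet> (M *v u)) + t^2*(v \<bullet> (M *v v) - lam * (v \<bullet> v)) \<le> 0" for t
    proof -
      define w where "w = u + t *\<^sub>R v"
      have wU: "w \<in> U" unfolding w_def using U uU vU by (auto simp: subspace_add subspace_scale)
      have ww: "w \<bullet> w = 1 + t^2 * (v \<bullet> v)" unfolding w_def
        using uu vu by (simp add: algebra_simps inner_commute power2_eq_square)
      have wpos: "w \<bullet> w > 0" using ww by (simp add: add_pos_nonneg)
      hence wn: "norm w > 0" by (simp add: dot_square_norm[symmetric] inner_gt_zero_iff)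
      have "w /\<^sub>R norm w \<in> ?K" using wU wn U by (auto simp: subspace_scale)
      hence "(w /\<^sub>R norm w) \<bullet> (M *v (w /\<^sub>R norm w)) \<le> lam" using umax lam_def by blast
      hence "inverse (norm w) * (inverse (norm w) * (w \<bullet> (M *v w))) \<le> lam"
        by (simp add: matrix_vector_mult_scaleR)
      hence "w \<bullet> (M *v w) \<le> lam * (norm w)^2" using wn
        by (simp add: field_simps power2_eq_square)
      hence "w \<bullet> (M *v w) \<le> lam * (w \<bullet> w)" by (simp add: power2_norm_eq_inner)
      moreover have "w \<bullet> (M *v w) = lam + 2*t*(v \<bullet> (M *v u)) + t^2 * (v \<bullet> (M *v v))"
        using sym_dot[OF sym, of u v] sym_dot[OF sym, of v u]
        unfolding w_def lam_def
        by (simp add: algebra_simps matrix_vector_mult_scaleR inner_commute power2_eq_square)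
      ultimately show ?thesis using ww by (simp add: algebra_simps)
    qed
    thus ?thesis by (rule quad_zero)
  qed
  define w where "w = M *v u - lam *\<^sub>R u"
  have wU: "w \<in> U" unfolding w_def using U uU inv by (auto simp: subspace_diff subspace_scale)
  have wu: "w \<bullet> u = 0" unfolding w_def lam_def using uu by (simp add: algebra_simps inner_commute)
  have "w \<bullet> (M *v u) = 0" using key[OF wU wu] .
  hence "w \<bullet> w = 0" using wu unfolding w_def by (simp add: algebra_simps)
  hence "w = 0" by simp
  thus ?thesis using uU nu unfolding w_def lam_def by auto
qed



definition diagm :: "('n \<Rightarrow> real) \<Rightarrow> real^'n^'n" where
  "diagm l = (\<chi> i j. if i = j then l i else 0)"

lemma eig_basis:
  fixes M :: "real^'n^'n"
  assumes sym: "transpose M = M"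
  shows "k \<le> CARD('n) \<Longrightarrow> \<exists>B. finite B \<and> card B = k \<and> pairwise orthogonal B \<and>
           (\<forall>b\<in>B. norm b = 1 \<and> M *v b = (b \<bullet> (M *v b)) *\<^sub>R b)"
proof (induction k)
  case 0
  show ?case by (intro exI[of _ "{}"]) auto
next
  case (Suc k)
  then obtain B where B: "finite B" "card B = k" "pairwise orthogonal B"
    "\<forall>b\<in>B. norm b = 1 \<and> M *v b = (b \<bullet> (M *v b)) *\<^sub>R b" by auto
  have "0 \<notin> B" using B(4) by force
  hence ind: "independent B" by (rule pairwise_orthogonal_independent[OF B(3)])
  have "dim B = k" using dim_span_eq_card_independent[OF ind] B(2) by (simp add: dim_span)
  hence "dim B < DIM(real^'n)" using Suc.prems by simp
  then obtain x where x: "x \<noteq> 0" "\<And>y. y \<in> span B \<Longrightarrow> orthogonal x y"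
    using orthogonal_to_subspace_exists by blast
  define U where "U = {y. \<forall>b\<in>B. b \<bullet> y = 0}"
  have sU: "subspace U" unfolding subspace_def U_def by (auto simp: inner_add_right)
  have invU: "M *v y \<in> U" if "y \<in> U" for y
  proof -
    have "b \<bullet> (M *v y) = 0" if b: "b \<in> B" for b
    proof -
      have "b \<bullet> (M *v y) = (M *v b) \<bullet> y" using sym_dot[OF sym, of b y] by simp
      also have "\<dots> = (b \<bullet> (M *v b)) * (b \<bullet> y)" using B(4) b by (metis inner_scaleR_left)
      also have "\<dots> = 0" using \<open>y \<in> U\<close> b unfolding U_def by simp
      finally show ?thesis .
    qed
    thus ?thesis unfolding U_def by blast
  qed
  have xU: "x \<in> U" unfolding U_def
    using x(2)[OF span_base] by (auto simp: orthogonal_def inner_commute)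
  obtain u where u: "u \<in> U" "norm u = 1" "M *v u = (u \<bullet> (M *v u)) *\<^sub>R u"
    using eig_exists[OF sym sU invU xU x(1)] by blast
  have uu: "u \<bullet> u = 1" using u(2) by (simp add: dot_square_norm)
  have uB: "u \<notin> B" using u(1) uu unfolding U_def by auto
  show ?case
  proof (intro exI[of _ "insert u B"] conjI)
    show "finite (insert u B)" using B by simp
    show "card (insert u B) = Suc k" using B uB by simp
    show "pairwise orthogonal (insert u B)" using B(3) u(1) unfolding U_def
      by (auto simp: pairwise_insert orthogonal_def inner_commute)
    show "\<forall>b\<in>insert u B. norm b = 1 \<and> M *v b = (b \<bullet> (M *v b)) *\<^sub>R b" using B(4) u by auto
  qed
qed

lemma spectral:
  fixes M :: "real^'n^'n"
  assumes sym: "transpose M = M"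
  obtains Q :: "real^'n^'n" and l :: "'n \<Rightarrow> real" where "transpose Q ** Q = mat 1" "Q ** transpose Q = mat 1"
    "M = Q ** diagm l ** transpose Q" "\<And>j. \<exists>x. norm x = 1 \<and> l j = x \<bullet> (M *v x)"
proof -
  obtain B where B: "finite B" "card B = CARD('n)" "pairwise orthogonal B"
    "\<forall>b\<in>B. norm b = 1 \<and> M *v b = (b \<bullet> (M *v b)) *\<^sub>R b"
    using eig_basis[OF sym, of "CARD('n)"] by auto
  obtain h where h: "bij_betw h (UNIV::'n set) B"
    using finite_same_card_bij[of "UNIV::'n set" B] B(1,2) by auto
  define Q :: "real^'n^'n" where "Q = (\<chi> i j. h j $ i)"
  define l where "l j = h j \<bullet> (M *v h j)" for j
  have hB: "h j \<in> B" for j using h by (auto simp: bij_betw_def)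
  have hinj: "h i = h j \<Longrightarrow> i = j" for i j using h by (auto simp: bij_betw_def inj_on_def)
  have QtQ: "transpose Q ** Q = mat 1"
  proof -
    have "(transpose Q ** Q) $ i $ j = mat 1 $ i $ j" for i j
    proof -
      have "(transpose Q ** Q) $ i $ j = h i \<bullet> h j"
        by (simp add: matrix_matrix_mult_def transpose_def Q_def inner_vec_def)
      also have "\<dots> = (if i = j then 1 else 0)"
      proof (cases "i = j")
        case True
        then show ?thesis using B(4) hB[of j] by (simp add: dot_square_norm)
      next
        case False
        then have "h i \<noteq> h j" using hinj by blast
        then show ?thesis using B(3) hB[of i] hB[of j] False
          by (auto simp: pairwise_def orthogonal_def)
      qed
      finally show ?thesis by (simp add: mat_def)
    qed
    thus ?thesis by (simp add: vec_eq_iff)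
  qed
  have QQt: "Q ** transpose Q = mat 1" using QtQ matrix_left_right_inverse by blast
  have MQ: "M ** Q = Q ** diagm l"
  proof -
    have "(M ** Q) $ i $ j = (Q ** diagm l) $ i $ j" for i j
    proof -
      have ev: "M *v h j = l j *\<^sub>R h j" using B(4) hB[of j] unfolding l_def by blast
      have "(M ** Q) $ i $ j = (M *v h j) $ i"
        by (simp add: matrix_matrix_mult_def matrix_vector_mult_def Q_def)
      also have "\<dots> = l j * h j $ i" using ev by simp
      also have "l j * h j $ i = (Q ** diagm l) $ i $ j"
        by (simp add: matrix_matrix_mult_def diagm_def Q_def if_distrib[of "\<lambda>x. _ * x"] mult.commute cong: if_cong)
      finally show ?thesis .
    qed
    thus ?thesis by (simp add: vec_eq_iff)
  qed
  have "M = M ** (Q ** transpose Q)" using QQt by simp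
  also have "\<dots> = Q ** diagm l ** transpose Q" by (simp add: matrix_mul_assoc MQ)
  finally have "M = Q ** diagm l ** transpose Q" .
  moreover have "\<exists>x. norm x = 1 \<and> l j = x \<bullet> (M *v x)" for j
    using B(4) hB[of j] unfolding l_def by blast
  ultimately show ?thesis using that QtQ QQt by blast
qed

lemma det_diagm: "det (diagm l) = prod l UNIV"
  by (subst det_diagonal) (auto simp: diagm_def)

lemma trace_diagm: "trace (diagm l) = sum l UNIV"
  by (simp add: trace_def diagm_def)

lemma det_conj:
  fixes Q D :: "real^'n^'n"
  assumes "transpose Q ** Q = mat 1"
  shows "det (Q ** D ** transpose Q) = det D"
proof -
  have "det Q * det Q = 1" using det_mul[of "transpose Q" Q] assms by simp
  thus ?thesis by (simp add: det_mul)
qed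

lemma trace_conj:
  fixes Q D :: "real^'n^'n"
  assumes "transpose Q ** Q = mat 1"
  shows "trace (Q ** D ** transpose Q) = trace D"
proof -
  have "trace (Q ** D ** transpose Q) = trace (transpose Q ** (Q ** D))" by (rule trace_mul_sym)
  also have "\<dots> = trace D" by (simp add: matrix_mul_assoc assms)
  finally show ?thesis .
qed

lemma pd_eig:
  fixes M :: "real^'n^'n"
  assumes "pos_def_mat M"
  obtains Q :: "real^'n^'n" and l :: "'n \<Rightarrow> real" where "transpose Q ** Q = mat 1" "Q ** transpose Q = mat 1"
    "M = Q ** diagm l ** transpose Q" "\<And>j. l j > 0"
proof -
  have sym: "transpose M = M" using assms by (simp add: pos_def_mat_def)
  obtain Q :: "real^'n^'n" and l :: "'n \<Rightarrow> real" where Q: "transpose Q ** Q = mat 1" "Q ** transpose Q = mat 1"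
    "M = Q ** diagm l ** transpose Q" "\<And>j. \<exists>x. norm x = 1 \<and> l j = x \<bullet> (M *v x)"
    using spectral[OF sym] by blast
  have "l j > 0" for j
  proof -
    obtain x where x: "norm x = 1" "l j = x \<bullet> (M *v x)" using Q(4) by blast
    have "x \<noteq> 0" using x(1) by auto
    thus ?thesis using assms x(2) unfolding pos_def_mat_def by simp
  qed
  thus ?thesis using that Q by blast
qed

lemma pd_det_pos:
  fixes M :: "real^'n^'n"
  assumes "pos_def_mat M"
  shows "det M > 0"
proof -
  obtain Q :: "real^'n^'n" and l :: "'n \<Rightarrow> real" where Q: "transpose Q ** Q = mat 1" "M = Q ** diagm l ** transpose Q" "\<And>j. l j > 0"
    using pd_eig[OF assms] by blast
  have "det M = prod l UNIV" using Q by (simp add: det_conj[OF Q(1)] det_diagm)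
  thus ?thesis using Q(3) by (simp add: prod_pos)
qed



lemma diagm_mult: "diagm a ** diagm b = diagm (\<lambda>j. a j * b j)"
  by (simp add: vec_eq_iff matrix_matrix_mult_def diagm_def if_distrib[of "\<lambda>x. x * _"] cong: if_cong)

lemma diagm_transpose: "transpose (diagm a) = diagm a"
  by (simp add: vec_eq_iff transpose_def diagm_def)

lemma diagm_one: "diagm (\<lambda>j. 1) = mat 1"
  by (simp add: vec_eq_iff diagm_def mat_def)

lemma diagm_add: "diagm a + diagm b = diagm (\<lambda>j. a j + b j)"
  by (simp add: vec_eq_iff diagm_def)

lemma quad_conj:
  fixes A B :: "real^'n^'n"
  shows "x \<bullet> ((A ** B ** transpose A) *v x) = (transpose A *v x) \<bullet> (B *v (transpose A *v x))"
proof -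
  have "(A ** B ** transpose A) *v x = A *v (B *v (transpose A *v x))"
    by (simp only: matrix_vector_mul_assoc matrix_mul_assoc)
  moreover have "x \<bullet> (A *v y) = (transpose A *v x) \<bullet> y" for y
    by (simp add: dot_lmul_matrix)
  ultimately show ?thesis by simp
qed

lemma prod_one_plus:
  fixes e :: "'a \<Rightarrow> real"
  assumes "finite A" "A \<noteq> {}" "\<And>i. i \<in> A \<Longrightarrow> e i \<ge> 0"
  shows "prod (\<lambda>i. 1 + e i) A \<ge> 1 + prod e A"
  using assms
proof (induction A rule: finite_ne_induct)
  case (singleton x)
  then show ?case by simp
next
  case (insert a F)
  have ea: "e a \<ge> 0" using insert by auto
  have P: "prod e F \<ge> 0" using insert by (auto intro: prod_nonneg)
  have IH: "prod (\<lambda>i. 1 + e i) F \<ge> 1 + prod e F" using insert by auto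
  have "prod (\<lambda>i. 1 + e i) (insert a F) = (1 + e a) * prod (\<lambda>i. 1 + e i) F" using insert by simp
  also have "\<dots> \<ge> (1 + e a) * (1 + prod e F)" using IH ea by (intro mult_left_mono) auto
  finally have "prod (\<lambda>i. 1 + e i) (insert a F) \<ge> (1 + e a) * (1 + prod e F)" .
  moreover have "(1 + e a) * (1 + prod e F) \<ge> 1 + e a * prod e F" using ea P
    by (simp add: algebra_simps)
  ultimately show ?case using insert by simp
qed

lemma det_le_trace:
  fixes M :: "real^'n^'n"
  assumes "pos_def_mat M"
  shows "det M \<le> (trace M / real CARD('n)) ^ CARD('n)"
proof -
  obtain Q :: "real^'n^'n" and l :: "'n \<Rightarrow> real" where Q: "transpose Q ** Q = mat 1" "M = Q ** diagm l ** transpose Q" "\<And>j. l j > 0"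
    using pd_eig[OF assms] by blast
  have dM: "det M = prod l UNIV" using Q by (simp add: det_conj[OF Q(1)] det_diagm)
  have tM: "trace M = sum l UNIV" using Q by (simp add: trace_conj[OF Q(1)] trace_diagm)
  define n where "n = CARD('n)"
  have n: "n > 0" unfolding n_def by simp
  have am: "(\<Sum>i\<in>UNIV. l i / card (UNIV::'n set)) \<ge> (prod l UNIV) powr (1 / card (UNIV::'n set))"
    by (rule arith_geom_mean) (use Q(3) less_imp_le in auto)
  hence am': "(prod l UNIV) powr (1 / n) \<le> sum l UNIV / n"
    unfolding n_def by (simp add: sum_divide_distrib)
  have Ppos: "prod l UNIV > 0" using Q(3) by (simp add: prod_pos)
  have Pnz: "prod l UNIV \<noteq> 0" using Ppos by linarith
  have "((prod l UNIV) powr (1 / n)) ^ n = ((prod l UNIV) powr (1 / n)) powr (real n)"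
    by (rule powr_realpow[symmetric]) (simp only: powr_gt_zero Pnz not_False_eq_True)
  also have "\<dots> = (prod l UNIV) powr ((1 / n) * n)" by (simp add: powr_powr)
  also have "\<dots> = prod l UNIV" using n Ppos by simp
  finally have "prod l UNIV = ((prod l UNIV) powr (1 / n)) ^ n" by simp
  also have "\<dots> \<le> (sum l UNIV / n) ^ n"
    using am' by (intro power_mono) auto
  finally show ?thesis using dM tM n_def by simp
qed

lemma det_add_ge:
  fixes W X :: "real^'n^'n"
  assumes W: "pos_def_mat W" and Xs: "transpose X = X" and Xp: "\<And>x. x \<bullet> (X *v x) \<ge> 0"
  shows "det (W + X) \<ge> det W + det X"
proof -
  obtain Q :: "real^'n^'n" and d :: "'n \<Rightarrow> real" where Q: "transpose Q ** Q = mat 1" "Q ** transpose Q = mat 1"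
    "W = Q ** diagm d ** transpose Q" "\<And>j. d j > 0"
    using pd_eig[OF W] by blast
  define s where "s j = sqrt (d j)" for j
  define L where "L = Q ** diagm s"
  define Li where "Li = diagm (\<lambda>j. 1 / s j) ** transpose Q"
  have sp: "s j > 0" for j using Q(4) by (simp add: s_def)
  have ss: "s j * s j = d j" for j using Q(4)[of j] by (simp add: s_def)
  have tL: "transpose L = diagm s ** transpose Q" by (simp add: L_def matrix_transpose_mul diagm_transpose)
  have "L ** transpose L = Q ** (diagm s ** diagm s) ** transpose Q" unfolding tL by (simp add: L_def matrix_mul_assoc)
  also have "diagm s ** diagm s = diagm d" by (simp add: diagm_mult ss)
  finally have LLt: "L ** transpose L = W" using Q(3) by simp
  have "Li ** L = diagm (\<lambda>j. 1 / s j) ** (transpose Q ** Q) ** diagm s"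
    unfolding L_def Li_def by (simp add: matrix_mul_assoc)
  also have "\<dots> = diagm (\<lambda>j. 1 / s j * s j)" by (simp add: Q(1) diagm_mult)
  also have "(\<lambda>j. 1 / s j * s j) = (\<lambda>j. 1)"
  proof (rule ext)
    fix j show "1 / s j * s j = 1" using sp[of j] by simp
  qed
  also have "diagm (\<lambda>j. 1) = mat 1" by (rule diagm_one)
  finally have LiL: "Li ** L = mat 1" .
  hence LLi: "L ** Li = mat 1" using matrix_left_right_inverse by blast
  define K where "K = Li ** X ** transpose Li"
  have Ks: "transpose K = K" unfolding K_def by (simp add: matrix_transpose_mul Xs matrix_mul_assoc)
  have Kp: "x \<bullet> (K *v x) \<ge> 0" for x unfolding K_def quad_conj by (rule Xp)
  have LKL: "L ** K ** transpose L = X"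
  proof -
    have "L ** K ** transpose L = (L ** Li) ** X ** transpose (L ** Li)"
      unfolding K_def by (simp add: matrix_transpose_mul matrix_mul_assoc)
    also have "\<dots> = X" using LLi by simp
    finally show ?thesis .
  qed
  obtain R :: "real^'n^'n" and e :: "'n \<Rightarrow> real" where R: "transpose R ** R = mat 1" "R ** transpose R = mat 1"
    "K = R ** diagm e ** transpose R" "\<And>j. \<exists>x. norm x = 1 \<and> e j = x \<bullet> (K *v x)"
    using spectral[OF Ks] by blast
  have ep: "e j \<ge> 0" for j using R(4)[of j] Kp by metis
  have "mat 1 + K = R ** diagm (\<lambda>j. 1) ** transpose R + R ** diagm e ** transpose R"
    using R by (simp add: diagm_one)
  also have "\<dots> = R ** (diagm (\<lambda>j. 1) + diagm e) ** transpose R"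
    by (simp add: matrix_add_ldistrib matrix_add_rdistrib')
  also have "\<dots> = R ** diagm (\<lambda>j. 1 + e j) ** transpose R" by (simp add: diagm_add)
  finally have IK: "mat 1 + K = R ** diagm (\<lambda>j. 1 + e j) ** transpose R" .
  have WX: "W + X = L ** (mat 1 + K) ** transpose L"
    using LLt LKL by (simp add: matrix_add_ldistrib matrix_add_rdistrib')
  have dIK: "det (mat 1 + K) = prod (\<lambda>j. 1 + e j) UNIV"
    unfolding IK det_conj[OF R(1)] det_diagm ..
  have "det (W + X) = det L * det (mat 1 + K) * det L"
    unfolding WX det_mul det_transpose ..
  hence dWX: "det (W + X) = det L * det L * prod (\<lambda>j. 1 + e j) UNIV"
    using dIK by simp
  have dW: "det W = det L * det L" using LLt det_mul[of L "transpose L"] by simp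
  have dX: "det X = det L * det L * prod e UNIV"
    using LKL R(3) by (metis det_mul det_transpose det_conj[OF R(1)] det_diagm mult.commute mult.assoc)
  have "det L * det L \<ge> 0" by simp
  moreover have "prod (\<lambda>j. 1 + e j) UNIV \<ge> 1 + prod e UNIV" using ep by (intro prod_one_plus) auto
  ultimately have "det L * det L * prod (\<lambda>j. 1 + e j) UNIV \<ge> det L * det L * (1 + prod e UNIV)"
    by (intro mult_left_mono)
  thus ?thesis using dWX dW dX by (simp add: algebra_simps)
qed



lemma minv:
  fixes A :: "real^'n^'n"
  assumes "invertible A"
  shows "A ** matrix_inv A = mat 1 \<and> matrix_inv A ** A = mat 1"
  using assms unfolding invertible_def matrix_inv_def by (rule someI_ex)

lemma minv_unique:
  fixes A B :: "real^'n^'n"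
  assumes "B ** A = mat 1" "invertible A"
  shows "B = matrix_inv A"
proof -
  have "B = B ** (A ** matrix_inv A)" using minv[OF assms(2)] by simp
  also have "\<dots> = matrix_inv A" by (simp add: matrix_mul_assoc assms(1))
  finally show ?thesis .
qed

lemma pd_invertible:
  fixes A :: "real^'n^'n"
  assumes "pos_def_mat A"
  shows "invertible A"
  using pd_det_pos[OF assms] invertible_det_nz by force

lemma minv_sym:
  fixes A :: "real^'n^'n"
  assumes "transpose A = A" "invertible A"
  shows "transpose (matrix_inv A) = matrix_inv A"
proof -
  have "transpose (matrix_inv A) ** A = transpose (A ** matrix_inv A)"
    using assms(1) by (simp add: matrix_transpose_mul)
  also have "\<dots> = mat 1" using minv[OF assms(2)] by simp
  finally show ?thesis using minv_unique assms(2) by blast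
qed

lemma minv_apply:
  fixes A :: "real^'n^'n"
  assumes "invertible A"
  shows "A *v (matrix_inv A *v x) = x"
  using minv[OF assms] by (simp add: matrix_vector_mul_assoc)

lemma pd_inv_pd:
  fixes A :: "real^'n^'n"
  assumes A: "pos_def_mat A"
  shows "pos_def_mat (matrix_inv A)"
proof -
  have As: "transpose A = A" using A by (simp add: pos_def_mat_def)
  have iA: "invertible A" by (rule pd_invertible[OF A])
  have "x \<bullet> (matrix_inv A *v x) > 0" if "x \<noteq> 0" for x
  proof -
    define y where "y = matrix_inv A *v x"
    have xy: "x = A *v y" unfolding y_def using minv_apply[OF iA] by simp
    have "y \<noteq> 0" using xy that by auto
    hence "y \<bullet> (A *v y) > 0" using A by (simp add: pos_def_mat_def)
    moreover have "x \<bullet> (matrix_inv A *v x) = y \<bullet> (A *v y)"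
      using xy unfolding y_def[symmetric] by (simp add: inner_commute)
    ultimately show ?thesis by simp
  qed
  thus ?thesis using minv_sym[OF As iA] by (simp add: pos_def_mat_def)
qed

lemma pd_nonneg:
  fixes A :: "real^'n^'n"
  assumes "pos_def_mat A"
  shows "x \<bullet> (A *v x) \<ge> 0"
  using assms unfolding pos_def_mat_def by (cases "x = 0") (auto intro: less_imp_le)

lemma inv_quad_mono:
  fixes S W :: "real^'n^'n"
  assumes S: "pos_def_mat S" and W: "pos_def_mat W"
    and le: "\<And>y. y \<bullet> (W *v y) \<le> y \<bullet> (S *v y)"
  shows "x \<bullet> (matrix_inv S *v x) \<le> x \<bullet> (matrix_inv W *v x)"
proof -
  have Ws: "transpose W = W" using W by (simp add: pos_def_mat_def)
  have Ss: "transpose S = S" using S by (simp add: pos_def_mat_def)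
  define y where "y = matrix_inv S *v x"
  define z where "z = matrix_inv W *v x"
  have xy: "S *v y = x" unfolding y_def using minv_apply[OF pd_invertible[OF S]] by simp
  have xz: "W *v z = x" unfolding z_def using minv_apply[OF pd_invertible[OF W]] by simp
  have "0 \<le> (z - y) \<bullet> (W *v (z - y))" by (rule pd_nonneg[OF W])
  also have "\<dots> = z \<bullet> (W *v z) - 2 * (y \<bullet> (W *v z)) + y \<bullet> (W *v y)"
    using sym_dot[OF Ws, of z y] by (simp add: algebra_simps inner_commute)
  also have "\<dots> = x \<bullet> z - 2 * (x \<bullet> y) + y \<bullet> (W *v y)"
    using xz by (simp add: inner_commute)
  finally have 1: "0 \<le> x \<bullet> z - 2 * (x \<bullet> y) + y \<bullet> (W *v y)" .
  have "y \<bullet> (S *v y) = x \<bullet> y" using xy by (simp add: inner_commute)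
  hence "x \<bullet> y \<le> x \<bullet> z" using 1 le[of y] by linarith
  thus ?thesis unfolding y_def z_def .
qed

lemma diag_quad:
  fixes A :: "real^'n^'n"
  shows "A $ i $ i = axis i 1 \<bullet> (A *v axis i 1)"
  by (simp add: inner_axis' matrix_vector_mult_basis column_def)

lemma trace_inv_mono:
  fixes S W :: "real^'n^'n"
  assumes S: "pos_def_mat S" and W: "pos_def_mat W"
    and le: "\<And>y. y \<bullet> (W *v y) \<le> y \<bullet> (S *v y)"
  shows "trace (matrix_inv S) \<le> trace (matrix_inv W)"
  unfolding trace_def
  by (intro sum_mono) (simp only: diag_quad inv_quad_mono[OF S W le])

lemma trace_pos:
  fixes A :: "real^'n^'n"
  assumes "pos_def_mat A"
  shows "trace A > 0"
proof -
  have "A $ i $ i > 0" for i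
    using assms unfolding diag_quad pos_def_mat_def by (simp add: axis_eq_0_iff)
  thus ?thesis unfolding trace_def by (simp add: sum_pos)
qed

lemma diagm_pd:
  assumes "\<And>i. d i > 0"
  shows "pos_def_mat (diagm d)"
proof -
  have "x \<bullet> (diagm d *v x) > 0" if nz: "x \<noteq> 0" for x
  proof -
    obtain i where i: "x $ i \<noteq> 0" using nz vec_eq_iff[of x 0] by auto
    have "x \<bullet> (diagm d *v x) = (\<Sum>j\<in>UNIV. d j * (x $ j)^2)"
      by (simp add: inner_vec_def matrix_vector_mult_def diagm_def if_distrib[of "\<lambda>y. _ * y"]
          power2_eq_square mult_ac cong: if_cong)
    also have "\<dots> > 0"
    proof -
      have a1: "0 < d i * (x$i)^2" using assms[of i] i by simp
      have a2: "\<And>j. j \<in> UNIV \<Longrightarrow> 0 \<le> d j * (x$j)^2" using assms by (simp add: less_imp_le)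
      show ?thesis using sum_pos2[of UNIV i "\<lambda>j. d j * (x$j)^2", OF _ _ a1 a2] by simp
    qed
    finally show ?thesis .
  qed
  thus ?thesis by (simp add: pos_def_mat_def diagm_transpose)
qed



theorem theorem5:
  fixes A W C V S :: "real^'n^'n" and sigma :: "'n \<Rightarrow> real"
  assumes W: "pos_def_mat W"
    and Cdiag: "diag_mat C" and Cpd: "pos_def_mat C"
    and sigma_pos: "\<And>i. sigma i > 0"
    and V: "V = (\<chi> i j. if i = j then (sigma i)^2 else 0)"
    and S: "pos_def_mat S"
    and DARE: "S = A ** S ** transpose A
       - A ** S ** transpose C ** matrix_inv (C ** S ** transpose C + V) ** C ** S ** transpose A
       + W"
  shows "ln (det S) \<ge>
    ln ((det A)^2 / ((1 / real CARD('n)) * (trace (matrix_inv W) + (\<Sum>i\<in>UNIV. (C $ i $ i)^2 / (sigma i)^2))) ^ CARD('n)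
        + det W)"
proof -
  define n where "n = CARD('n)"
  define T where "T = transpose C"
  define G where "G = C ** S ** T + V"
  define Gi where "Gi = matrix_inv G"
  define Si where "Si = matrix_inv S"
  define Wi where "Wi = matrix_inv W"
  define Vi where "Vi = diagm (\<lambda>i. 1 / (sigma i)^2)"
  define Tt where "Tt = trace Wi + (\<Sum>i\<in>UNIV. (C $ i $ i)^2 / (sigma i)^2)"
  have Ss: "transpose S = S" using S by (simp add: pos_def_mat_def)
  have Vd: "V = diagm (\<lambda>i. (sigma i)^2)" using V by (simp add: diagm_def)
  have sig2: "(sigma i)^2 > 0" for i using sigma_pos[of i] by simp
  have Vpd: "pos_def_mat V" unfolding Vd by (rule diagm_pd[OF sig2])
  have Vipd: "pos_def_mat Vi" unfolding Vi_def by (rule diagm_pd) (use sig2 in simp)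
  have Vs: "transpose V = V" using Vpd by (simp add: pos_def_mat_def)
  have Vis: "transpose Vi = Vi" using Vipd by (simp add: pos_def_mat_def)
  have VVi: "V ** Vi = mat 1"
  proof -
    have "V ** Vi = diagm (\<lambda>i. (sigma i)^2 * (1 / (sigma i)^2))" unfolding Vd Vi_def by (rule diagm_mult)
    also have "(\<lambda>i. (sigma i)^2 * (1 / (sigma i)^2)) = (\<lambda>i. 1)"
    proof (rule ext)
      fix i show "(sigma i)^2 * (1 / (sigma i)^2) = 1" using sig2[of i] by simp
    qed
    finally show ?thesis by (simp add: diagm_one)
  qed
  have Gs: "transpose G = G"
    unfolding G_def T_def by (simp add: transpose_add' matrix_transpose_mul Ss Vs matrix_mul_assoc)
  have Gpd: "pos_def_mat G"
  proof -
    have "x \<bullet> (G *v x) > 0" if nz: "x \<noteq> 0" for x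
    proof -
      have "x \<bullet> (G *v x) = x \<bullet> ((C ** S ** transpose C) *v x) + x \<bullet> (V *v x)"
        unfolding G_def T_def by (simp add: matrix_vector_mult_add_rdistrib inner_add_right)
      also have "x \<bullet> ((C ** S ** transpose C) *v x) \<ge> 0"
        unfolding quad_conj by (rule pd_nonneg[OF S])
      moreover have "x \<bullet> (V *v x) > 0" using Vpd nz by (simp add: pos_def_mat_def)
      ultimately show ?thesis by linarith
    qed
    thus ?thesis using Gs by (simp add: pos_def_mat_def)
  qed
  have iG: "invertible G" by (rule pd_invertible[OF Gpd])
  have GGi: "G ** Gi = mat 1" and GiG: "Gi ** G = mat 1" using minv[OF iG] Gi_def by auto
  have iS: "invertible S" by (rule pd_invertible[OF S])
  have SSi: "S ** Si = mat 1" and SiS: "Si ** S = mat 1" using minv[OF iS] Si_def by auto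
  have Sipd: "pos_def_mat Si" unfolding Si_def by (rule pd_inv_pd[OF S])
  have Sis: "transpose Si = Si" using Sipd by (simp add: pos_def_mat_def)
  define Mm where "Mm = Si + T ** Vi ** C"
  have Ms: "transpose Mm = Mm"
    unfolding Mm_def T_def by (simp add: transpose_add' matrix_transpose_mul Sis Vis matrix_mul_assoc)
  have Mpd: "pos_def_mat Mm"
  proof -
    have "x \<bullet> (Mm *v x) > 0" if nz: "x \<noteq> 0" for x
    proof -
      have CT: "C = transpose T" unfolding T_def by simp
      have "x \<bullet> (Mm *v x) = x \<bullet> (Si *v x) + x \<bullet> ((T ** Vi ** transpose T) *v x)"
        unfolding Mm_def CT by (simp add: matrix_vector_mult_add_rdistrib inner_add_right)
      also have "x \<bullet> ((T ** Vi ** transpose T) *v x) \<ge> 0"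
        unfolding quad_conj by (rule pd_nonneg[OF Vipd])
      moreover have "x \<bullet> (Si *v x) > 0" using Sipd nz by (simp add: pos_def_mat_def)
      ultimately show ?thesis by linarith
    qed
    thus ?thesis using Ms by (simp add: pos_def_mat_def)
  qed
  define P where "P = S - S ** T ** Gi ** C ** S"
  have h1: "X ** S ** Si = X" for X :: "real^'n^'n"
    by (simp add: SSi flip: matrix_mul_assoc)
  have h3: "X ** V ** Vi = X" for X :: "real^'n^'n"
    by (simp add: VVi flip: matrix_mul_assoc)
  have h2: "X ** Gi ** C ** S ** T = X - X ** Gi ** V" for X :: "real^'n^'n"
  proof -
    have CST: "C ** S ** T = G - V" unfolding G_def by simp
    have "X ** Gi ** C ** S ** T = X ** Gi ** (C ** S ** T)" by (simp add: matrix_mul_assoc)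
    also have "\<dots> = X ** (Gi ** G) - X ** Gi ** V"
      unfolding CST by (simp add: matrix_sub_ldistrib' matrix_mul_assoc)
    also have "\<dots> = X - X ** Gi ** V" using GiG by simp
    finally show ?thesis .
  qed
  have PM: "P ** Mm = mat 1"
  proof -
    have "P ** Mm = mat 1 - S ** T ** Gi ** C + (S ** T ** Vi ** C - (S ** T ** Vi ** C - S ** T ** Gi ** C))"
      unfolding P_def Mm_def
      by (simp add: matrix_add_ldistrib matrix_sub_rdistrib' matrix_sub_ldistrib' matrix_add_rdistrib'
          matrix_mul_assoc h1 h2 h3 SSi)
    thus ?thesis by simp
  qed
  have iM: "invertible Mm" by (rule pd_invertible[OF Mpd])
  have PMi: "P = matrix_inv Mm" by (rule minv_unique[OF PM iM])
  have Ppd: "pos_def_mat P" unfolding PMi by (rule pd_inv_pd[OF Mpd])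
  have Ps: "transpose P = P" using Ppd by (simp add: pos_def_mat_def)
  define X where "X = A ** P ** transpose A"
  have XE: "X = A ** S ** transpose A
       - A ** S ** transpose C ** matrix_inv (C ** S ** transpose C + V) ** C ** S ** transpose A"
    unfolding X_def P_def Gi_def G_def T_def
    by (simp add: matrix_sub_ldistrib' matrix_sub_rdistrib' matrix_mul_assoc)
  have "S = X + W" unfolding XE by (rule DARE)
  hence SX: "S = W + X" by (simp add: add.commute)
  have Xs: "transpose X = X" unfolding X_def by (simp add: matrix_transpose_mul Ps matrix_mul_assoc)
  have Xp: "x \<bullet> (X *v x) \<ge> 0" for x unfolding X_def quad_conj by (rule pd_nonneg[OF Ppd])
  have d1: "det S \<ge> det W + det X" using det_add_ge[OF W Xs Xp] SX by simp
  have dMpos: "det Mm > 0" by (rule pd_det_pos[OF Mpd])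
  have dPM: "det P * det Mm = 1" using PM det_mul[of P Mm] by simp
  have dX: "det X = (det A)^2 / det Mm"
  proof -
    have "det X = det A * det P * det A" unfolding X_def by (simp add: det_mul)
    moreover have "det P = 1 / det Mm" using dPM dMpos by (simp add: field_simps)
    ultimately show ?thesis by (simp add: power2_eq_square)
  qed
  have ent: "(T ** Vi ** C) $ i $ i = (C $ i $ i)^2 / (sigma i)^2" for i
  proof -
    have "(T ** Vi ** C) $ i $ i = (\<Sum>k\<in>UNIV. C $ k $ i * (1 / (sigma k)^2) * C $ k $ i)"
      by (simp add: matrix_matrix_mult_def T_def transpose_def Vi_def diagm_def
          if_distrib[of "\<lambda>y. _ * y"] cong: if_cong)
    also have "\<dots> = (\<Sum>k\<in>UNIV. if k = i then (C $ i $ i)^2 / (sigma i)^2 else 0)"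
      by (rule sum.cong) (use Cdiag in \<open>auto simp: diag_mat_def power2_eq_square\<close>)
    also have "\<dots> = (C $ i $ i)^2 / (sigma i)^2" by simp
    finally show ?thesis .
  qed
  have trM: "trace Mm = trace Si + (\<Sum>i\<in>UNIV. (C $ i $ i)^2 / (sigma i)^2)"
    unfolding Mm_def trace_add by (simp add: trace_def ent)
  have trSW: "trace Si \<le> trace Wi"
    unfolding Si_def Wi_def
  proof (rule trace_inv_mono[OF S W])
    fix y
    show "y \<bullet> (W *v y) \<le> y \<bullet> (S *v y)"
      using Xp[of y] SX by (simp add: matrix_vector_mult_add_rdistrib inner_add_right)
  qed
  have trMle: "trace Mm \<le> Tt" unfolding Tt_def trM using trSW by simp
  have trMpos: "trace Mm > 0" by (rule trace_pos[OF Mpd])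
  have npos: "real n > 0" unfolding n_def by simp
  have "det Mm \<le> (trace Mm / real n) ^ n" unfolding n_def by (rule det_le_trace[OF Mpd])
  also have "\<dots> \<le> (Tt / real n) ^ n"
    using trMle trMpos npos by (intro power_mono divide_right_mono) auto
  also have "Tt / real n = (1 / real n) * Tt" by simp
  finally have dMle: "det Mm \<le> ((1 / real n) * Tt) ^ n" .
  have Dpos: "((1 / real n) * Tt) ^ n > 0" using dMle dMpos by linarith
  have "(det A)^2 / ((1 / real n) * Tt) ^ n \<le> (det A)^2 / det Mm"
    by (rule divide_left_mono) (use dMle dMpos Dpos in auto)
  hence le: "(det A)^2 / ((1 / real n) * Tt) ^ n + det W \<le> det S" using d1 dX by simp
  have dWpos: "det W > 0" by (rule pd_det_pos[OF W])
  have pos: "(det A)^2 / ((1 / real n) * Tt) ^ n + det W > 0"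
    using Dpos dWpos by (simp add: add_nonneg_pos)
  have "ln ((det A)^2 / ((1 / real n) * Tt) ^ n + det W) \<le> ln (det S)"
    using le pos by simp
  thus ?thesis unfolding n_def Tt_def Wi_def .
qed

end
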